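(* Let $G=(V,E)$, $k\ge 3$, the choice strings $c_{i,j}$ ($1\le i<j\le k$), $L=k+1$ and $d=k-2$ be as in the construction described in the context. If $G$ has a clique of size $k$, then there is a string $s$ of length $L$ such that every choice string $c_{i,j}$ has a substring $s_{i,j}$ of length $L$ with $d_H(s,s_{i,j})\le d$.
   Context: Let $G=(V,E)$ be an undirected simple graph with $V=\{v_1,\dots,v_n\}$ and edge set $E=\{e_1,\dots,e_m\}$, and let $k\ge 3$ be an integer; put $N=\binom{k}{2}$. The alphabet consists of pairwise distinct symbols: encoding symbols $\sigma_1,\dots,\sigma_n$, string identification symbols $\varphi_1,\dots,\varphi_N$, and a synchronizing symbol $\#$. Order the pairs $(i,j)$ with $1\le i<j\le k$ lexicographically, $(1,2),(1,3),\dots,(1,k),(2,3),\dots,(k-1,k)$, and let $i'$ denote the position of $(i,j)$ in this order. For an edge $e$ joining $v_r$ and $v_s$ with $r<s$ define $\mathrm{block}(i,j,e)=\varphi_{i'}^{\,i-1}\,\sigma_r\,\varphi_{i'}^{\,j-i-1}\,\sigma_s\,\varphi_{i'}^{\,k-j}\,\#$ (a string of length $k+1$), and the choice string $c_{i,j}=\mathrm{block}(i,j,e_1)\,\varphi_{i'}^{\,k}\,\mathrm{block}(i,j,e_2)\,\varphi_{i'}^{\,k}\cdots\varphi_{i'}^{\,k}\,\mathrm{block}(i,j,e_m)$. Set $L=k+1$ and $d=k-2$. $d_H$ denotes Hamming distance. *)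

theory Defs
  imports Main
begin

text \<open>Alphabet: encoding symbols sigma_r (vertex v_r), string identification
symbols phi_p (p-th pair), and the synchronizing symbol #.\<close>
datatype sym = Sig nat | Phi nat | Hash

text \<open>Position (1-based) of the pair (i,j) in the lexicographic order of
{(a,b). 1 <= a < b <= k}.\<close>
definition pair_pos :: "nat \<Rightarrow> nat \<Rightarrow> nat \<Rightarrow> nat" where
  "pair_pos k i j = card {(a, b). 1 \<le> a \<and> a < b \<and> b \<le> k \<and> (a < i \<or> (a = i \<and> b \<le> j))}"

definition block :: "nat \<Rightarrow> nat \<Rightarrow> nat \<Rightarrow> nat \<times> nat \<Rightarrow> sym list" where
  "block k i j e = (let p = pair_pos k i j in
     replicate (i - 1) (Phi p) @ [Sig (fst e)] @ replicate (j - i - 1) (Phi p)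
     @ [Sig (snd e)] @ replicate (k - j) (Phi p) @ [Hash])"

definition choice_str :: "nat \<Rightarrow> (nat \<times> nat) list \<Rightarrow> nat \<Rightarrow> nat \<Rightarrow> sym list" where
  "choice_str k es i j = (case map (block k i j) es of
      [] \<Rightarrow> []
    | b # bs \<Rightarrow> b @ concat (map (\<lambda>x. replicate k (Phi (pair_pos k i j)) @ x) bs))"

definition hamming :: "'a list \<Rightarrow> 'a list \<Rightarrow> nat" where
  "hamming s t = card {q. q < length s \<and> s ! q \<noteq> t ! q}"

definition is_substring :: "'a list \<Rightarrow> 'a list \<Rightarrow> bool" where
  "is_substring t c \<longleftrightarrow> (\<exists>u w. c = u @ t @ w)"

definition simple_graph :: "nat \<Rightarrow> (nat \<times> nat) list \<Rightarrow> bool" where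
  "simple_graph n es \<longleftrightarrow> distinct es \<and> (\<forall>(r, s) \<in> set es. 1 \<le> r \<and> r < s \<and> s \<le> n)"

definition has_clique :: "nat \<Rightarrow> (nat \<times> nat) list \<Rightarrow> nat \<Rightarrow> bool" where
  "has_clique n es k \<longleftrightarrow> (\<exists>K. K \<subseteq> {1..n} \<and> card K = k \<and>
      (\<forall>u\<in>K. \<forall>v\<in>K. u < v \<longrightarrow> (u, v) \<in> set es))"

end

theory Submission
  imports Defs
begin

lemma block_len: "1 \<le> i \<Longrightarrow> i < j \<Longrightarrow> j \<le> k \<Longrightarrow> length (block k i j e) = k + 1"
  by (simp add: block_def Let_def)

lemma block_nth:
  assumes "1 \<le> i" "i < j" "j \<le> k"
  shows "block k i j e ! (i - 1) = Sig (fst e)"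
    "block k i j e ! (j - 1) = Sig (snd e)"
    "block k i j e ! k = Hash"
  using assms by (auto simp add: block_def Let_def nth_append)

lemma block_sub:
  assumes "x \<in> set es"
  shows "is_substring (block k i j x) (choice_str k es i j)"
proof (cases es)
  case Nil then show ?thesis using assms by simp
next
  case (Cons e rest)
  show ?thesis
  proof (cases "x = e")
    case True
    then show ?thesis unfolding is_substring_def choice_str_def using Cons
      by (metis append_Nil list.simps(9) list.case(2))
  next
    case False
    then have "x \<in> set rest" using Cons assms by simp
    then obtain ys zs where r: "rest = ys @ x # zs" by (meson split_list)
    define P where "P = replicate k (Phi (pair_pos k i j))"
    have "choice_str k es i j = (block k i j e @ concat (map (\<lambda>y. P @ y) (map (block k i j) ys)) @ P) @ block k i j x @ concat (map (\<lambda>y. P @ y) (map (block k i j) zs))"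
      by (simp add: choice_str_def Cons r P_def)
    then show ?thesis unfolding is_substring_def by blast
  qed
qed

theorem proposition1:
  fixes n k :: nat and es :: "(nat \<times> nat) list"
  assumes "k \<ge> 3"
    and "simple_graph n es"
    and "has_clique n es k"
  shows "\<exists>s :: sym list. length s = k + 1 \<and>
           (\<forall>i j. 1 \<le> i \<and> i < j \<and> j \<le> k \<longrightarrow>
              (\<exists>t. length t = k + 1 \<and> is_substring t (choice_str k es i j)
                   \<and> hamming s t \<le> k - 2))"
proof -
  obtain K where K: "K \<subseteq> {1..n}" "card K = k" "\<forall>u\<in>K. \<forall>v\<in>K. u < v \<longrightarrow> (u, v) \<in> set es"
    using assms(3) unfolding has_clique_def by blast
  have fin: "finite K" using K(1) finite_subset by blast
  define L where "L = sorted_list_of_set K"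
  have lenL: "length L = k" using K(2) fin by (simp add: L_def)
  have setL: "set L = K" using fin by (simp add: L_def)
  have sortL: "sorted_wrt (<) L" by (simp add: L_def)
  define s where "s = map Sig L @ [Hash]"
  have "length s = k + 1" using lenL by (simp add: s_def)
  moreover have "\<exists>t. length t = k + 1 \<and> is_substring t (choice_str k es i j)
                   \<and> hamming s t \<le> k - 2" if ij: "1 \<le> i" "i < j" "j \<le> k" for i j
  proof -
    define e where "e = (L ! (i - 1), L ! (j - 1))"
    have lt: "L ! (i - 1) < L ! (j - 1)" using sortL ij lenL
      by (simp add: sorted_wrt_iff_nth_less)
    have "e \<in> set es" using K(3) lt ij lenL setL unfolding e_def
      by (metis diff_less less_le_trans less_one not_le nth_mem order_less_imp_le diff_le_self)
    define t where "t = block k i j e"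
    have lt_: "length t = k + 1" using ij by (simp add: t_def block_len)
    have sub: "is_substring t (choice_str k es i j)" using block_sub[OF \<open>e \<in> set es\<close>] t_def by simp
    have si: "s ! (i - 1) = Sig (L ! (i - 1))" using ij lenL by (simp add: s_def nth_append)
    have sj: "s ! (j - 1) = Sig (L ! (j - 1))" using ij lenL by (simp add: s_def nth_append)
    have sk: "s ! k = Hash" using lenL by (simp add: s_def nth_append)
    have "{q. q < length s \<and> s ! q \<noteq> t ! q} \<subseteq> {0..<k+1} - {i - 1, j - 1, k}"
      using si sj sk block_nth[OF ij, of e] \<open>length s = k + 1\<close> unfolding t_def e_def by auto
    hence "hamming s t \<le> card ({0..<k+1} - {i - 1, j - 1, k})"
      unfolding hamming_def by (intro card_mono) auto
    also have "\<dots> = k + 1 - 3"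
    proof -
      have "card {i - 1, j - 1, k} = 3" using ij by (auto simp: card_insert_if)
      thus ?thesis using ij by (subst card_Diff_subset) auto
    qed
    finally show ?thesis using lt_ sub by auto
  qed
  ultimately show ?thesis by blast
qed

end
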